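(* Let $G$ be a finite simple $3$-connected graph of order $n$ in which every edge lies in a triangle. Then $e(G)\ge 2n-2$, and equality holds if and only if $G$ is isomorphic to the wheel $W_n$.
   Context: All graphs are finite and simple; $e(G)$ denotes the number of edges. The wheel $W_n=K_1\vee C_{n-1}$ is the join of a single vertex with a cycle on $n-1$ vertices, i.e. a cycle $C_{n-1}$ together with a new vertex adjacent to all its vertices. A $3$-connected graph has at least $4$ vertices. *)

theory Defs
  imports Main
begin

definition simple_graph :: "'a set \<Rightarrow> 'a set set \<Rightarrow> bool" where
  "simple_graph V E \<longleftrightarrow> finite V \<and>
     (\<forall>e\<in>E. \<exists>u v. e = {u, v} \<and> u \<noteq> v \<and> u \<in> V \<and> v \<in> V)"

definition connected_graph :: "'a set \<Rightarrow> 'a set set \<Rightarrow> bool" where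
  "connected_graph V E \<longleftrightarrow> V \<noteq> {} \<and>
     (\<forall>u\<in>V. \<forall>v\<in>V. (u, v) \<in> {(x, y). {x, y} \<in> E}\<^sup>*)"

definition del_edges :: "'a set \<Rightarrow> 'a set set \<Rightarrow> 'a set set" where
  "del_edges X E = {e \<in> E. e \<inter> X = {}}"

definition k_connected :: "nat \<Rightarrow> 'a set \<Rightarrow> 'a set set \<Rightarrow> bool" where
  "k_connected k V E \<longleftrightarrow> k < card V \<and>
     (\<forall>X. X \<subseteq> V \<and> card X < k \<longrightarrow> connected_graph (V - X) (del_edges X E))"

definition every_edge_in_triangle :: "'a set set \<Rightarrow> bool" where
  "every_edge_in_triangle E \<longleftrightarrow>
     (\<forall>e\<in>E. \<exists>u v w. e = {u, v} \<and> {v, w} \<in> E \<and> {u, w} \<in> E)"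

text \<open>Wheel W_n on vertices 0..n-1: hub 0, cycle 1,2,...,n-1,1.\<close>
definition wheel_vertices :: "nat \<Rightarrow> nat set" where
  "wheel_vertices n = {0..<n}"

definition wheel_edges :: "nat \<Rightarrow> nat set set" where
  "wheel_edges n = {{0, i} | i. 1 \<le> i \<and> i < n}
                 \<union> {{i, i + 1} | i. 1 \<le> i \<and> i + 1 < n}
                 \<union> {{1, n - 1}}"

definition graph_iso :: "'a set \<Rightarrow> 'a set set \<Rightarrow> 'b set \<Rightarrow> 'b set set \<Rightarrow> bool" where
  "graph_iso V E V' E' \<longleftrightarrow> (\<exists>f. bij_betw f V V' \<and>
     (\<forall>u\<in>V. \<forall>v\<in>V. {u, v} \<in> E \<longleftrightarrow> {f u, f v} \<in> E'))"

end

theory Submission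
  imports Defs
begin


definition nb :: "'a set set \<Rightarrow> 'a \<Rightarrow> 'a set" where
  "nb E x = {y. {x,y} \<in> E}"

lemma edge_sym: "{x,y} = {y,x}" by (rule insert_commute)

lemma sg_edge_form:
  assumes "simple_graph V E" "e \<in> E"
  shows "\<exists>x y. e = {x,y} \<and> x \<noteq> y \<and> x \<in> V \<and> y \<in> V"
  using assms unfolding simple_graph_def by blast

lemma sg_edge:
  assumes "simple_graph V E" "{x,y} \<in> E"
  shows "x \<noteq> y \<and> x \<in> V \<and> y \<in> V"
proof -
  obtain u w where "{x,y} = {u,w}" "u \<noteq> w" "u \<in> V" "w \<in> V"
    using sg_edge_form[OF assms] by blast
  then have "(x=u \<and> y=w) \<or> (x=w \<and> y=u)" "u \<noteq> w" "u \<in> V" "w \<in> V"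
    by (simp_all add: doubleton_eq_iff)
  then show ?thesis by blast
qed

lemma sg_finV: "simple_graph V E \<Longrightarrow> finite V"
  unfolding simple_graph_def by simp

lemma sg_finite_E:
  assumes "simple_graph V E" shows "finite E"
proof -
  have "E \<subseteq> Pow V"
  proof
    fix e assume "e \<in> E"
    then obtain x y where "e = {x,y}" "x \<in> V" "y \<in> V" using sg_edge_form[OF assms] by blast
    then show "e \<in> Pow V" by simp
  qed
  then show ?thesis using sg_finV[OF assms] by (simp add: finite_subset)
qed

lemma nb_sub: assumes "simple_graph V E" shows "nb E x \<subseteq> V"
proof
  fix y assume "y \<in> nb E x"
  then have "{x,y} \<in> E" unfolding nb_def by simp
  from sg_edge[OF assms this] show "y \<in> V" by simp
qed

lemma nb_finite: "simple_graph V E \<Longrightarrow> finite (nb E x)"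
  using finite_subset[OF nb_sub sg_finV] .

lemma nb_irr: assumes "simple_graph V E" shows "x \<notin> nb E x"
proof
  assume "x \<in> nb E x"
  then have "{x,x} \<in> E" unfolding nb_def by simp
  from sg_edge[OF assms this] show False by simp
qed

lemma tri_edge:
  assumes "every_edge_in_triangle E" "{x,y} \<in> E"
  shows "\<exists>w. {x,w} \<in> E \<and> {y,w} \<in> E"
proof -
  obtain u v w where "{x,y} = {u,v}" "{v,w} \<in> E" "{u,w} \<in> E"
    using assms(1)[unfolded every_edge_in_triangle_def, rule_format, OF assms(2)] by metis
  then have d: "(x=u \<and> y=v) \<or> (x=v \<and> y=u)" by (simp add: doubleton_eq_iff)
  show ?thesis
  proof (cases "x=u \<and> y=v")
    case True then show ?thesis using \<open>{v,w} \<in> E\<close> \<open>{u,w} \<in> E\<close> by (intro exI[of _ w]) simp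
  next
    case False then have "x=v \<and> y=u" using d by blast
    then show ?thesis using \<open>{v,w} \<in> E\<close> \<open>{u,w} \<in> E\<close> by (intro exI[of _ w]) simp
  qed
qed

lemma closed_reach:
  assumes "(x,y) \<in> {(p,q). {p,q} \<in> F}\<^sup>*" "x \<in> S"
    and "\<And>p q. p \<in> S \<Longrightarrow> {p,q} \<in> F \<Longrightarrow> q \<in> S"
  shows "y \<in> S"
  using assms(1,2)
proof (induction rule: rtrancl_induct)
  case base then show ?case .
next
  case (step y z)
  then have "{y,z} \<in> F" "y \<in> S" by auto
  then show ?case using assms(3) by simp
qed


lemma handshake:
  assumes "simple_graph V E"
  shows "2 * card E = (\<Sum>x\<in>V. card (nb E x))"
proof -
  have fV: "finite V" using sg_finV[OF assms] .
  have fE: "finite E" using sg_finite_E[OF assms] .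
  define D where "D = {(x,y). {x,y} \<in> E}"
  have D1: "D = Sigma V (nb E)"
  proof (rule set_eqI)
    fix z :: "'a \<times> 'a"
    obtain x y where z: "z = (x,y)" by (cases z)
    show "z \<in> D \<longleftrightarrow> z \<in> Sigma V (nb E)"
      unfolding z D_def nb_def using sg_edge[OF assms, of x y] by auto
  qed
  have c1: "card D = (\<Sum>x\<in>V. card (nb E x))"
    unfolding D1 using fV nb_finite[OF assms] by (simp add: card_SigmaI)
  have D2: "D = (\<Union>e\<in>E. {(x,y). {x,y} = e})"
    unfolding D_def by auto
  have fib: "\<And>e. e \<in> E \<Longrightarrow> card {(x,y). {x,y} = e} = 2"
  proof -
    fix e assume "e \<in> E"
    then obtain p q where pq: "e = {p,q}" "p \<noteq> q" using sg_edge_form[OF assms] by metis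
    have "{(x,y). {x,y} = e} = {(p,q),(q,p)}" using pq by (auto simp: doubleton_eq_iff)
    then show "card {(x,y). {x,y} = e} = 2" using pq by simp
  qed
  have fin: "\<And>e. e \<in> E \<Longrightarrow> finite {(x,y). {x,y} = e}"
    using fib card.infinite by (metis zero_neq_numeral)
  have "card D = (\<Sum>e\<in>E. card {(x,y). {x,y} = e})"
    unfolding D2 by (rule card_UN_disjoint) (use fE fin in auto)
  also have "\<dots> = (\<Sum>e\<in>E. 2)" using fib by simp
  also have "\<dots> = 2 * card E" by simp
  finally have "card D = 2 * card E" .
  then show ?thesis using c1 by linarith
qed

lemma min_deg3:
  assumes "simple_graph V E" "k_connected 3 V E" "x \<in> V"
  shows "card (nb E x) \<ge> 3"
proof (rule ccontr)
  assume "\<not> 3 \<le> card (nb E x)"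
  then have cX: "card (nb E x) < 3" by simp
  let ?X = "nb E x"
  have XV: "?X \<subseteq> V" using nb_sub[OF assms(1)] .
  have con: "connected_graph (V - ?X) (del_edges ?X E)"
    using assms(2) cX XV unfolding k_connected_def by blast
  have xX: "x \<notin> ?X" using nb_irr[OF assms(1)] .
  have c4: "card V > 3" using assms(2) unfolding k_connected_def by simp
  have fV: "finite V" using sg_finV[OF assms(1)] .
  have fX: "finite ?X" using nb_finite[OF assms(1)] .
  have ci: "card (insert x ?X) \<le> 3" using cX fX xX by (simp add: card_insert_if)
  have "\<not> V \<subseteq> insert x ?X"
  proof
    assume "V \<subseteq> insert x ?X"
    then have "card V \<le> card (insert x ?X)" using card_mono fX by (metis finite_insert)
    then show False using ci c4 by linarith
  qed
  then obtain w where w: "w \<in> V" "w \<noteq> x" "w \<notin> ?X" by blast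
  have "(x, w) \<in> {(p,q). {p,q} \<in> del_edges ?X E}\<^sup>*"
    using con w xX assms(3) unfolding connected_graph_def by blast
  then have "w \<in> {x}"
  proof (rule closed_reach)
    show "x \<in> {x}" by simp
    fix p q assume "p \<in> {x}" "{p,q} \<in> del_edges ?X E"
    then have "{x,q} \<in> E" "{x,q} \<inter> ?X = {}" unfolding del_edges_def by auto
    then show "q \<in> {x}" unfolding nb_def by auto
  qed
  then show False using w by simp
qed


lemma wheel_mem:
  assumes "m \<ge> 3"
  shows "{x,y} \<in> wheel_edges m \<longleftrightarrow> x \<noteq> y \<and> x < m \<and> y < m \<and>
     (x = 0 \<or> y = 0 \<or> y = x + 1 \<or> x = y + 1 \<or> (x = 1 \<and> y = m - 1) \<or> (y = 1 \<and> x = m - 1))"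
  using assms unfolding wheel_edges_def
  apply (simp add: doubleton_eq_iff)
  apply (rule iffI)
   apply (elim disjE exE conjE; auto)
  apply (elim conjE disjE)
  by auto
lemma wheel_tri:
  assumes "m \<ge> 5" "{A,B} \<in> wheel_edges m" "{B,C} \<in> wheel_edges m" "{A,C} \<in> wheel_edges m"
  shows "A = 0 \<or> B = 0 \<or> C = 0"
proof (rule ccontr)
  assume nz: "\<not> (A = 0 \<or> B = 0 \<or> C = 0)"
  have h: "\<And>x y. x \<noteq> 0 \<Longrightarrow> y \<noteq> 0 \<Longrightarrow> {x,y} \<in> wheel_edges m \<Longrightarrow> x < m \<and> y < m \<and> (y = x + 1 \<or> x = y + 1 \<or> (x = 1 \<and> y = m - 1) \<or> (y = 1 \<and> x = m - 1))"
    using assms(1) by (simp add: wheel_mem)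
  have 1: "B = A + 1 \<or> A = B + 1 \<or> (A = 1 \<and> B = m - 1) \<or> (B = 1 \<and> A = m - 1)" "A < m" "B < m"
    using h[OF _ _ assms(2)] nz by auto
  have 2: "C = B + 1 \<or> B = C + 1 \<or> (B = 1 \<and> C = m - 1) \<or> (C = 1 \<and> B = m - 1)" "C < m"
    using h[OF _ _ assms(3)] nz by auto
  have 3: "C = A + 1 \<or> A = C + 1 \<or> (A = 1 \<and> C = m - 1) \<or> (C = 1 \<and> A = m - 1)"
    using h[OF _ _ assms(4)] nz by auto
  show False using 1 2 3 assms(1) by linarith
qed

lemma wheel_nz:
  assumes "m \<ge> 3" "x \<noteq> 0" "y \<noteq> 0"
  shows "{x,y} \<in> wheel_edges m \<longleftrightarrow> x < m \<and> y < m \<and> (y = x + 1 \<or> x = y + 1 \<or> (x = 1 \<and> y = m - 1) \<or> (y = 1 \<and> x = m - 1))"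
  using assms by (auto simp add: wheel_mem)

lemma wheel_other:
  assumes "m \<ge> 5" "1 \<le> B" "1 \<le> C" "{B,C} \<in> wheel_edges m"
  shows "\<exists>C'. 1 \<le> C' \<and> C' < m \<and> C' \<noteq> B \<and> C' \<noteq> C \<and> {C,C'} \<in> wheel_edges m \<and>
     (\<forall>w. 1 \<le> w \<longrightarrow> {C,w} \<in> wheel_edges m \<longrightarrow> {C',w} \<in> wheel_edges m \<longrightarrow> False)"
proof -
  have BC: "B < m" "C < m" "C = B + 1 \<or> B = C + 1 \<or> (B = 1 \<and> C = m - 1) \<or> (C = 1 \<and> B = m - 1)"
    using wheel_nz[of m B C] assms by auto
  define nx where "nx = (if C = m - 1 then 1 else C + 1)"
  define pv where "pv = (if C = 1 then m - 1 else C - 1)"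
  have nx: "1 \<le> nx" "nx < m" "nx \<noteq> C" "{C,nx} \<in> wheel_edges m"
    unfolding nx_def using assms BC by (auto simp: wheel_nz)
  have pv: "1 \<le> pv" "pv < m" "pv \<noteq> C" "{C,pv} \<in> wheel_edges m"
    unfolding pv_def using assms BC by (auto simp: wheel_nz)
  have np: "nx \<noteq> pv" unfolding nx_def pv_def using assms BC by auto
  have Bnp: "B = nx \<or> B = pv" unfolding nx_def pv_def using assms BC by auto
  have nb: "\<And>w. 1 \<le> w \<Longrightarrow> {C,w} \<in> wheel_edges m \<Longrightarrow> w = nx \<or> w = pv"
  proof -
    fix w assume w1: "1 \<le> w" and "{C,w} \<in> wheel_edges m"
    then have "w < m" "w = C + 1 \<or> C = w + 1 \<or> (C = 1 \<and> w = m - 1) \<or> (w = 1 \<and> C = m - 1)"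
      using wheel_nz[of m C w] assms by auto
    then show "w = nx \<or> w = pv" unfolding nx_def pv_def using assms BC w1 by auto
  qed
  have npW: "{nx,pv} \<notin> wheel_edges m"
  proof
    assume "{nx,pv} \<in> wheel_edges m"
    then have H: "pv = nx + 1 \<or> nx = pv + 1 \<or> (nx = 1 \<and> pv = m - 1) \<or> (pv = 1 \<and> nx = m - 1)"
      using wheel_nz[of m nx pv] nx pv assms by auto
    consider "C = 1" | "C = m - 1" | "1 < C \<and> C < m - 1" using assms BC by linarith
    then show False
    proof cases
      case 1
      then have "nx = 2" "pv = m - 1" unfolding nx_def pv_def using assms by auto
      then show False using H assms by linarith
    next
      case 2
      then have "nx = 1" "pv = m - 2" unfolding nx_def pv_def using assms by auto
      then show False using H assms by linarith
    next
      case 3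
      then have "nx = C + 1" "pv = C - 1" unfolding nx_def pv_def using assms by auto
      then show False using H assms 3 by linarith
    qed
  qed
  have wd: "x \<noteq> y" if "{x,y} \<in> wheel_edges m" for x y
    using that assms by (simp add: wheel_mem)
  have nonb: "False" if "x = nx \<or> x = pv" "1 \<le> w" "{C,w} \<in> wheel_edges m" "{x,w} \<in> wheel_edges m" for x w
  proof -
    have "w = nx \<or> w = pv" using nb that by blast
    moreover have "w \<noteq> x" using wd[OF that(4)] by simp
    ultimately show False using that npW by (auto simp: insert_commute)
  qed
  show ?thesis
  proof (cases "B = nx")
    case True
    show ?thesis
      apply (rule exI[of _ pv])
      using pv np True nb nonb by (metis insert_commute)
  next
    case False
    then have "B = pv" using Bnp by simp
    show ?thesis
      apply (rule exI[of _ nx])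
      using nx np \<open>B = pv\<close> nb nonb by (metis insert_commute)
  qed
qed

lemma wheel_shift1:
  assumes "1 \<le> k" "k + 2 \<le> m" "m \<ge> 4" "i < m" "j < m"
  shows "{(if i \<le> k then i else i+1), (if j \<le> k then j else j+1)} \<in> wheel_edges (m+1)
     \<longleftrightarrow> {i,j} \<in> wheel_edges m \<and> {i,j} \<noteq> {k,k+1}"
  using assms by (auto simp: wheel_mem doubleton_eq_iff split: if_splits)

lemma wheel_shift2:
  assumes "1 \<le> k" "k + 2 \<le> m" "m \<ge> 4" "j < m"
  shows "{k+1, (if j \<le> k then j else j+1)} \<in> wheel_edges (m+1)
     \<longleftrightarrow> j = 0 \<or> j = k \<or> j = k + 1"
  using assms by (auto simp: wheel_mem split: if_splits)
lemma wheel_close2: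
  assumes "m \<ge> 4" "j < m"
  shows "{m,j} \<in> wheel_edges (m+1) \<longleftrightarrow> j = 0 \<or> j = 1 \<or> j = m - 1"
  using assms by (auto simp: wheel_mem)
lemma wheel4: "{x,y} \<in> wheel_edges 4 \<longleftrightarrow> x \<noteq> y \<and> x < 4 \<and> y < 4"
  by (auto simp: wheel_mem)

lemma wheel_close1:
  assumes "m \<ge> 4" "i < m" "j < m"
  shows "{i,j} \<in> wheel_edges (m+1) \<longleftrightarrow> {i,j} \<in> wheel_edges m \<and> {i,j} \<noteq> {1,m-1}"
  using assms by (auto simp: wheel_mem doubleton_eq_iff)

lemma card_wheel:
  assumes "m \<ge> 4"
  shows "card (wheel_edges m) = 2 * m - 2"
proof -
  let ?S = "(\<lambda>i. {0,i}) ` {1..<m}"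
  let ?R = "(\<lambda>i. {i,i+1}) ` {1..<m-1}"
  have eq: "wheel_edges m = insert {1, m-1} (?S \<union> ?R)"
    unfolding wheel_edges_def by (auto simp: image_iff; fastforce)
  have cS: "card ?S = m - 1"
    by (subst card_image) (auto simp: inj_on_def doubleton_eq_iff)
  have cR: "card ?R = m - 2"
    by (subst card_image) (auto simp: inj_on_def doubleton_eq_iff)
  have d: "?S \<inter> ?R = {}" by (auto simp: doubleton_eq_iff)
  have n1: "{1, m-1} \<notin> ?S"
  proof
    assume "{1, m-1} \<in> ?S"
    then obtain i where "{1, m-1} = {0,i}" by blast
    then have "0 \<in> {1::nat, m-1}" by blast
    then show False using assms by auto
  qed
  have n2: "{1, m-1} \<notin> ?R"
  proof
    assume "{1, m-1} \<in> ?R"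
    then obtain i where "{1, m-1} = {i,i+1}" "i \<in> {1..<m-1}" by (rule imageE)
    then have "(1 = i \<and> m - 1 = i + 1) \<or> (1 = i + 1 \<and> m - 1 = i)"
      by (simp only: doubleton_eq_iff)
    then show False using assms by linarith
  qed
  have n: "{1, m-1} \<notin> ?S \<union> ?R" using n1 n2 by blast
  have "card (?S \<union> ?R) = m - 1 + (m - 2)"
    using card_Un_disjoint[OF _ _ d] cS cR by simp
  then show ?thesis using n eq assms by simp
qed


locale red =
  fixes V :: "'a set" and E :: "'a set set" and v a b c :: 'a
  assumes sg: "simple_graph V E" and tri: "every_edge_in_triangle E" and vV: "v \<in> V"
    and nbv: "nb E v = {a,b,c}" and ab_d: "a \<noteq> b" and bc_d: "b \<noteq> c" and ac_d: "a \<noteq> c"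
    and ab: "{a,b} \<in> E" and bc: "{b,c} \<in> E"
begin

definition "V' = V - {v}"
definition "E' = insert {a,c} (del_edges {v} E)"

lemma abcV: "a \<in> V" "b \<in> V" "c \<in> V"
  using nb_sub[OF sg, of v] nbv by auto

lemma abc_v: "a \<noteq> v" "b \<noteq> v" "c \<noteq> v"
  using nb_irr[OF sg, of v] nbv by auto

lemma vedge: "{v,y} \<in> E \<longleftrightarrow> y \<in> {a,b,c}"
  using nbv unfolding nb_def by blast

lemma E'_iff: "{x,y} \<in> E' \<longleftrightarrow> {x,y} = {a,c} \<or> ({x,y} \<in> E \<and> x \<noteq> v \<and> y \<noteq> v)"
  unfolding E'_def del_edges_def by auto

lemma clique: "p \<in> {a,b,c} \<Longrightarrow> q \<in> {a,b,c} \<Longrightarrow> p \<noteq> q \<Longrightarrow> {p,q} \<in> E'"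
  using ab bc abc_v unfolding E'_iff by (auto simp: insert_commute)

lemma sg': "simple_graph V' E'"
  unfolding simple_graph_def
proof (intro conjI ballI)
  show "finite V'" unfolding V'_def using sg_finV[OF sg] by simp
  fix e assume "e \<in> E'"
  then consider "e = {a,c}" | "e \<in> E" "v \<notin> e" unfolding E'_def del_edges_def by blast
  then show "\<exists>u w. e = {u, w} \<and> u \<noteq> w \<and> u \<in> V' \<and> w \<in> V'"
  proof cases
    case 1 then show ?thesis using ac_d abcV abc_v unfolding V'_def by blast
  next
    case 2
    then obtain x y where "e = {x,y}" "x \<noteq> y" "x \<in> V" "y \<in> V" using sg_edge_form[OF sg] by metis
    then have "e = {x,y} \<and> x \<noteq> y \<and> x \<in> V' \<and> y \<in> V'" using 2 unfolding V'_def by auto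
    then show ?thesis by (rule exI[of _ x, OF exI[of _ y]])
  qed
qed

lemma tri': "every_edge_in_triangle E'"
  unfolding every_edge_in_triangle_def
proof
  fix e assume "e \<in> E'"
  then consider "e = {a,c}" | "e \<in> E" "v \<notin> e" unfolding E'_def del_edges_def by blast
  then show "\<exists>x y w. e = {x, y} \<and> {y, w} \<in> E' \<and> {x, w} \<in> E'"
  proof cases
    case 1 then show ?thesis using clique ab_d bc_d ac_d
      by (intro exI[of _ a] exI[of _ c] exI[of _ b]) simp
  next
    case 2
    then obtain x y where xy: "e = {x,y}" "x \<noteq> y" using sg_edge_form[OF sg] by metis
    have xv: "x \<noteq> v" "y \<noteq> v" using 2 xy by auto
    obtain w where w: "{x,w} \<in> E" "{y,w} \<in> E" using tri_edge[OF tri] 2 xy by metis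
    show ?thesis
    proof (cases "w = v")
      case False
      then have "{x,w} \<in> E'" "{y,w} \<in> E'" using w xv unfolding E'_iff by auto
      then show ?thesis using xy by (intro exI[of _ x] exI[of _ y] exI[of _ w]) simp
    next
      case True
      then have "x \<in> {a,b,c}" "y \<in> {a,b,c}" using w vedge by (simp_all add: insert_commute)
      then obtain r where r: "r \<in> {a,b,c}" "r \<noteq> x" "r \<noteq> y"
        using ab_d bc_d ac_d by auto
      have "{x,r} \<in> E'" "{y,r} \<in> E'"
        using clique r \<open>x \<in> {a,b,c}\<close> \<open>y \<in> {a,b,c}\<close> by auto
      then show ?thesis using xy by (intro exI[of _ x] exI[of _ y] exI[of _ r]) simp
    qed
  qed
qed

end

context red begin

lemma conn':
  assumes kc: "k_connected 3 V E" and c5: "card V \<ge> 5"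
  shows "k_connected 3 V' E'"
  unfolding k_connected_def
proof (intro conjI allI impI)
  have fV: "finite V" using sg_finV[OF sg] .
  have cV': "card V' = card V - 1" unfolding V'_def using vV fV by simp
  then show "3 < card V'" using c5 by simp
  fix X assume XX: "X \<subseteq> V' \<and> card X < 3"
  then have XV: "X \<subseteq> V" and cX: "card X < 3" and vX: "v \<notin> X" unfolding V'_def by auto
  have conG: "connected_graph (V - X) (del_edges X E)"
    using kc XV cX unfolding k_connected_def by blast
  let ?R = "{(p,q). {p,q} \<in> del_edges X E}"
  let ?R' = "{(p,q). {p,q} \<in> del_edges X E'}"
  have clq: "(p,q) \<in> ?R'" if "p \<in> {a,b,c} - X" "q \<in> {a,b,c} - X" "p \<noteq> q" for p q
    using clique[of p q] that unfolding del_edges_def by auto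
  have sub: "(p,q) \<in> ?R'" if "(p,q) \<in> ?R" "p \<noteq> v" "q \<noteq> v" for p q
    using that unfolding del_edges_def by (auto simp: E'_iff)
  have reach: "(u,w) \<in> ?R'\<^sup>*" if u: "u \<in> V' - X" and w: "w \<in> V' - X" for u w
  proof -
    have uw: "(u,w) \<in> ?R\<^sup>*" using conG u w unfolding connected_graph_def V'_def by blast
    have uv: "u \<noteq> v" using u unfolding V'_def by blast
    have "(y \<noteq> v \<longrightarrow> (u,y) \<in> ?R'\<^sup>*) \<and> (y = v \<longrightarrow> (\<forall>z\<in>{a,b,c} - X. (u,z) \<in> ?R'\<^sup>*))"
      if "(u,y) \<in> ?R\<^sup>*" for y
      using that
    proof (induction rule: rtrancl_induct)
      case base then show ?case using uv by simp
    next
      case (step y z)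
      have yz: "{y,z} \<in> E" "y \<notin> X" "z \<notin> X" using step(2) unfolding del_edges_def by auto
      have ynz: "y \<noteq> z" using sg_edge[OF sg yz(1)] by simp
      show ?case
      proof (cases "y = v")
        case True
        then have "z \<in> {a,b,c}" using yz(1) vedge by simp
        then show ?thesis using step(3) True ynz yz by auto
      next
        case False
        then have uy: "(u,y) \<in> ?R'\<^sup>*" using step(3) by simp
        show ?thesis
        proof (cases "z = v")
          case True
          then have yabc: "y \<in> {a,b,c} - X" using yz vedge by (simp add: insert_commute)
          have "\<forall>z'\<in>{a,b,c} - X. (u,z') \<in> ?R'\<^sup>*"
          proof
            fix z' assume z': "z' \<in> {a,b,c} - X"
            show "(u,z') \<in> ?R'\<^sup>*"
            proof (cases "z' = y")
              case True then show ?thesis using uy by simp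
            next
              case False
              then have "(y,z') \<in> ?R'" using clq[OF yabc z'] by simp
              then show ?thesis using uy by (simp add: rtrancl_into_rtrancl)
            qed
          qed
          then show ?thesis using True by simp
        next
          case zv: False
          have "(y,z) \<in> ?R'" using sub[of y z] step(2) False zv by simp
          then show ?thesis using uy zv by (simp add: rtrancl_into_rtrancl)
        qed
      qed
    qed
    then show ?thesis using uw w unfolding V'_def by blast
  qed
  have "V' - X \<noteq> {}"
  proof
    assume "V' - X = {}"
    then have "V' \<subseteq> X" by blast
    then have "card V' \<le> card X" using card_mono finite_subset XV fV by metis
    then show False using cX cV' c5 by linarith
  qed
  then show "connected_graph (V' - X) (del_edges X E')"
    unfolding connected_graph_def using reach by blast
qed

lemma card_red: "card E = card E' + 2 + (if {a,c} \<in> E then 1 else 0)"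
proof -
  have fE: "finite E" using sg_finite_E[OF sg] .
  define D where "D = del_edges {v} E"
  define Ev where "Ev = {{v,a},{v,b},{v,c}}"
  have split: "E = D \<union> Ev"
  proof (rule set_eqI)
    fix e show "e \<in> E \<longleftrightarrow> e \<in> D \<union> Ev"
    proof
      assume eE: "e \<in> E"
      show "e \<in> D \<union> Ev"
      proof (cases "v \<in> e")
        case False then show ?thesis using eE unfolding D_def del_edges_def by auto
      next
        case True
        obtain x y where xy: "e = {x,y}" "x \<noteq> y" using sg_edge_form[OF sg eE] by metis
        then have "x = v \<or> y = v" using True by auto
        then obtain z where "e = {v,z}" using xy by (metis insert_commute)
        then have "z \<in> {a,b,c}" using vedge eE by simp
        then show ?thesis using \<open>e = {v,z}\<close> unfolding Ev_def by auto
      qed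
    next
      assume "e \<in> D \<union> Ev"
      then show "e \<in> E" unfolding D_def del_edges_def Ev_def using vedge by auto
    qed
  qed
  have disj: "D \<inter> Ev = {}" unfolding D_def del_edges_def Ev_def by auto
  have cEv: "card Ev = 3" unfolding Ev_def using ab_d bc_d ac_d by (simp add: doubleton_eq_iff)
  have fD: "finite D" using fE unfolding D_def del_edges_def by simp
  have cE: "card E = card D + 3" using split disj cEv fD card_Un_disjoint[of D Ev] unfolding Ev_def by simp
  have acD: "{a,c} \<in> D \<longleftrightarrow> {a,c} \<in> E" unfolding D_def del_edges_def using abc_v by auto
  have "card E' = card D + (if {a,c} \<in> E then 0 else 1)"
    unfolding E'_def D_def[symmetric] using fD acD by (simp add: card_insert_if)
  then show ?thesis using cE by simp
qed

lemma edge_V': "x \<noteq> v \<Longrightarrow> y \<noteq> v \<Longrightarrow> {a,c} \<notin> E \<Longrightarrow> ({x,y} \<in> E \<longleftrightarrow> {x,y} \<in> E' \<and> {x,y} \<noteq> {a,c})"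
  unfolding E'_iff by auto

end


lemma deg3_path:
  assumes sg: "simple_graph V E" and tri: "every_edge_in_triangle E" and c3: "card (nb E v) = 3"
  shows "\<exists>a b c. nb E v = {a,b,c} \<and> a \<noteq> b \<and> b \<noteq> c \<and> a \<noteq> c \<and> {a,b} \<in> E \<and> {b,c} \<in> E"
proof -
  obtain p q r where pqr: "nb E v = {p,q,r}" "p \<noteq> q" "q \<noteq> r" "p \<noteq> r"
    using c3 card_3_iff by metis
  have adj: "\<exists>w \<in> {p,q,r}. w \<noteq> y \<and> {y,w} \<in> E" if "y \<in> {p,q,r}" for y
  proof -
    have "{v,y} \<in> E" using that pqr(1) unfolding nb_def by blast
    then obtain w where w: "{v,w} \<in> E" "{y,w} \<in> E" using tri_edge[OF tri] by metis
    have "w \<in> {p,q,r}" using w(1) pqr(1) unfolding nb_def by blast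
    moreover have "w \<noteq> y" using sg_edge[OF sg w(2)] by auto
    ultimately show ?thesis using w by blast
  qed
  have sym: "{x,y} \<in> E \<Longrightarrow> {y,x} \<in> E" for x y by (simp add: insert_commute)
  have s1: "{p,q,r} = {q,p,r}" "{p,q,r} = {p,r,q}" by auto
  show ?thesis
  proof (cases "{p,q} \<in> E")
    case True
    show ?thesis
    proof (cases "{p,r} \<in> E")
      case True
      have "{q,p} \<in> E" using sym \<open>{p,q} \<in> E\<close> by blast
      then have "nb E v = {q,p,r} \<and> q \<noteq> p \<and> p \<noteq> r \<and> q \<noteq> r \<and> {q,p} \<in> E \<and> {p,r} \<in> E"
        using pqr s1 True by simp
      then show ?thesis by blast
    next
      case False
      then have "{r,q} \<in> E" using adj[of r] sym by auto
      then have "{q,r} \<in> E" using sym by blast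
      then have "nb E v = {p,q,r} \<and> p \<noteq> q \<and> q \<noteq> r \<and> p \<noteq> r \<and> {p,q} \<in> E \<and> {q,r} \<in> E"
        using pqr \<open>{p,q} \<in> E\<close> by simp
      then show ?thesis by blast
    qed
  next
    case False
    then have "{p,r} \<in> E" "{q,r} \<in> E" using adj[of p] adj[of q] sym by auto
    then have "{r,q} \<in> E" using sym by blast
    then have "nb E v = {p,r,q} \<and> p \<noteq> r \<and> r \<noteq> q \<and> p \<noteq> q \<and> {p,r} \<in> E \<and> {r,q} \<in> E"
      using pqr s1 \<open>{p,r} \<in> E\<close> by simp
    then show ?thesis by blast
  qed
qed

lemma wheel_form:
  assumes "e \<in> wheel_edges n" "n \<ge> 2"
  shows "\<exists>i j. e = {i,j} \<and> i < n \<and> j < n"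
proof -
  have "(\<exists>i. e = {0,i} \<and> 1 \<le> i \<and> i < n) \<or> (\<exists>i. e = {i,i+1} \<and> 1 \<le> i \<and> i+1 < n) \<or> e = {1,n-1}"
    using assms(1) unfolding wheel_edges_def by blast
  then show ?thesis
  proof (elim disjE exE conjE)
    fix i assume "e = {0,i}" "i < n" then show ?thesis using assms(2) by (intro exI[of _ 0] exI[of _ i]) simp
  next
    fix i assume "e = {i,i+1}" "i + 1 < n" then show ?thesis by (intro exI[of _ i] exI[of _ "i+1"]) simp
  next
    assume "e = {1,n-1}" then show ?thesis using assms(2) by (intro exI[of _ 1] exI[of _ "n-1"]) simp
  qed
qed

lemma iso_card:
  assumes sg: "simple_graph V E" and n4: "card V \<ge> 4"
    and iso: "graph_iso V E (wheel_vertices (card V)) (wheel_edges (card V))"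
  shows "card E = 2 * card V - 2"
proof -
  let ?n = "card V"
  obtain f where bij: "bij_betw f V {0..<?n}"
    and adj: "\<forall>u\<in>V. \<forall>w\<in>V. {u,w} \<in> E \<longleftrightarrow> {f u, f w} \<in> wheel_edges ?n"
    using iso unfolding graph_iso_def wheel_vertices_def by blast
  have inj: "inj_on f V" using bij bij_betw_def by blast
  have EP: "E \<subseteq> Pow V"
  proof
    fix e assume "e \<in> E"
    then obtain x y where "e = {x,y}" "x \<in> V" "y \<in> V" using sg_edge_form[OF sg] by metis
    then show "e \<in> Pow V" by simp
  qed
  have injE: "inj_on ((`) f) E" using inj_on_image_Pow[OF inj] EP inj_on_subset by blast
  have img: "(`) f ` E = wheel_edges ?n"
  proof (rule set_eqI)
    fix e show "e \<in> (`) f ` E \<longleftrightarrow> e \<in> wheel_edges ?n"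
    proof
      assume "e \<in> (`) f ` E"
      then obtain e0 where e0: "e0 \<in> E" "e = f ` e0" by blast
      then obtain x y where "e0 = {x,y}" "x \<in> V" "y \<in> V" using sg_edge_form[OF sg] by metis
      then show "e \<in> wheel_edges ?n" using adj e0 by simp
    next
      assume eW: "e \<in> wheel_edges ?n"
      have "\<exists>i j. e = {i,j} \<and> i < ?n \<and> j < ?n"
        using wheel_form eW n4 by simp
      then obtain i j where ij: "e = {i,j}" "i < ?n" "j < ?n" by blast
      have "i \<in> f ` V" "j \<in> f ` V" using bij ij unfolding bij_betw_def by auto
      then obtain x y where xy: "x \<in> V" "y \<in> V" "i = f x" "j = f y" by blast
      then have "{x,y} \<in> E" using adj eW ij by simp
      moreover have "e = f ` {x,y}" using ij xy by simp
      ultimately show "e \<in> (`) f ` E" by blast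
    qed
  qed
  have "card E = card (wheel_edges ?n)" using card_image[OF injE] img by simp
  then show ?thesis using card_wheel[OF n4] by simp
qed


context red begin

lemma E_to_E': "{x,y} \<in> E \<Longrightarrow> x \<noteq> v \<Longrightarrow> y \<noteq> v \<Longrightarrow> {x,y} \<in> E'"
  by (simp add: E'_iff)

lemma abcV': "a \<in> V'" "b \<in> V'" "c \<in> V'"
  using abcV abc_v unfolding V'_def by auto

lemma nohub:
  assumes acE: "{a,c} \<notin> E" and m5: "m \<ge> 5" and bij: "bij_betw g V' {0..<m}"
    and adj: "\<forall>u\<in>V'. \<forall>w\<in>V'. {u,w} \<in> E' \<longleftrightarrow> {g u, g w} \<in> wheel_edges m"
    and p: "p \<in> {a,c}" and q: "q \<in> {a,c}" and pq: "p \<noteq> q" and gp: "g p = 0"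
  shows False
proof -
  have inj: "inj_on g V'" using bij bij_betw_def by blast
  have pV: "p \<in> V'" "q \<in> V'" using p q abcV' by auto
  have acpq: "{a,c} = {p,q}" using p q pq by auto
  have qnz: "g q \<noteq> 0" using inj pV pq gp inj_on_eq_iff by metis
  have bp: "b \<noteq> p" using p ab_d bc_d by auto
  have bnz: "g b \<noteq> 0" using inj pV abcV' bp gp inj_on_eq_iff by metis
  have "{b,q} \<in> E'" using clique[of b q] q ab_d bc_d by auto
  then have bqW: "{g b, g q} \<in> wheel_edges m" using adj abcV' pV by blast
  obtain C' where C': "1 \<le> C'" "C' < m" "C' \<noteq> g b" "C' \<noteq> g q" "{g q, C'} \<in> wheel_edges m"
    "\<And>w. 1 \<le> w \<Longrightarrow> {g q, w} \<in> wheel_edges m \<Longrightarrow> {C',w} \<in> wheel_edges m \<Longrightarrow> False"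
    using wheel_other[OF m5 _ _ bqW] bnz qnz by auto
  have "C' \<in> g ` V'" using bij C'(2) unfolding bij_betw_def by auto
  then obtain q' where q': "q' \<in> V'" "g q' = C'" by blast
  have qq'E': "{q,q'} \<in> E'" using adj pV q' C'(5) by blast
  have q'p: "q' \<noteq> p" using q' gp C'(1) by auto
  have q'q: "q' \<noteq> q" using q' C'(4) by auto
  have q'b: "q' \<noteq> b" using q' C'(3) by auto
  have q'v: "q' \<noteq> v" using q' unfolding V'_def by auto
  have qv: "q \<noteq> v" using pV unfolding V'_def by auto
  have "{q,q'} \<noteq> {a,c}" using acpq q'p q'q by (auto simp: doubleton_eq_iff)
  then have qq'E: "{q,q'} \<in> E" using qq'E' unfolding E'_iff by auto
  obtain w where w: "{q,w} \<in> E" "{q',w} \<in> E" using tri_edge[OF tri qq'E] by metis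
  have wv: "w \<noteq> v"
  proof
    assume "w = v"
    then have "{v,q'} \<in> E" using w(2) by (simp add: insert_commute)
    then have "q' \<in> {a,b,c}" using vedge by simp
    then show False using q'p q'q q'b p q pq by auto
  qed
  have wV': "w \<in> V'" using sg_edge[OF sg w(1)] wv unfolding V'_def by auto
  have wp: "w \<noteq> p"
  proof
    assume "w = p"
    then have "{q,p} \<in> E" using w(1) by simp
    then have "{a,c} \<in> E" using acpq by (simp add: insert_commute)
    then show False using acE by simp
  qed
  have "{q,w} \<in> E'" "{q',w} \<in> E'" using E_to_E' w wv qv q'v by auto
  then have "{g q, g w} \<in> wheel_edges m" "{C', g w} \<in> wheel_edges m"
    using adj pV q' wV' by auto
  moreover have "g w \<noteq> 0" using inj pV wV' wp gp inj_on_eq_iff by metis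
  ultimately show False using C'(6)[of "g w"] by simp
qed

end

context red begin

lemma relabel:
  fixes s :: "nat \<Rightarrow> nat" and L :: nat and g :: "'a \<Rightarrow> nat"
  assumes acE: "{a,c} \<notin> E" and cV: "card V = m + 1" and m4: "m \<ge> 4"
    and bij: "bij_betw g V' {0..<m}"
    and adj: "\<forall>u\<in>V'. \<forall>w\<in>V'. {u,w} \<in> E' \<longleftrightarrow> {g u, g w} \<in> wheel_edges m"
    and gb: "g b = 0"
    and sinj: "inj_on s {0..<m}" and srange: "\<And>i. i < m \<Longrightarrow> s i < m + 1"
    and Lr: "L < m + 1" and sL: "\<And>i. i < m \<Longrightarrow> s i \<noteq> L"
    and hs1: "\<And>i j. i < m \<Longrightarrow> j < m \<Longrightarrow> {s i, s j} \<in> wheel_edges (m+1) \<longleftrightarrow> {i,j} \<in> wheel_edges m \<and> {i,j} \<noteq> {g a, g c}"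
    and hs2: "\<And>j. j < m \<Longrightarrow> {L, s j} \<in> wheel_edges (m+1) \<longleftrightarrow> j = 0 \<or> j = g a \<or> j = g c"
  shows "graph_iso V E (wheel_vertices (m+1)) (wheel_edges (m+1))"
proof -
  define f where "f x = (if x = v then L else s (g x))" for x
  have inj: "inj_on g V'" using bij bij_betw_def by blast
  have gr: "x \<in> V' \<Longrightarrow> g x < m" for x using bij unfolding bij_betw_def by auto
  have inV': "x \<in> V \<Longrightarrow> x \<noteq> v \<Longrightarrow> x \<in> V'" for x unfolding V'_def by auto
  have finj: "inj_on f V"
  proof (rule inj_onI)
    fix x y assume xy: "x \<in> V" "y \<in> V" "f x = f y"
    show "x = y"
    proof (cases "x = v"; cases "y = v")
      assume "x = v" "y = v" then show ?thesis by simp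
    next
      assume "x = v" "y \<noteq> v"
      then have "L = s (g y)" using xy unfolding f_def by simp
      then show ?thesis using sL[OF gr[OF inV'[OF xy(2) \<open>y \<noteq> v\<close>]]] by simp
    next
      assume "x \<noteq> v" "y = v"
      then have "L = s (g x)" using xy unfolding f_def by simp
      then show ?thesis using sL[OF gr[OF inV'[OF xy(1) \<open>x \<noteq> v\<close>]]] by simp
    next
      assume xv: "x \<noteq> v" and yv: "y \<noteq> v"
      then have "s (g x) = s (g y)" using xy unfolding f_def by simp
      then have "g x = g y" using sinj gr inV' xy xv yv inj_on_eq_iff[OF sinj] by simp
      then show ?thesis using inj inV' xy xv yv inj_on_eq_iff[OF inj] by simp
    qed
  qed
  have fsub: "f ` V \<subseteq> {0..<m+1}"
    unfolding f_def using Lr srange gr inV' by auto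
  have fV: "finite V" using sg_finV[OF sg] .
  have "card (f ` V) = m + 1" using card_image[OF finj] cV by simp
  then have fimg: "f ` V = {0..<m+1}" using card_subset_eq[OF _ fsub] by simp
  have fbij: "bij_betw f V {0..<m+1}" unfolding bij_betw_def using finj fimg by simp
  have gac: "{x,y} = {a,c} \<longleftrightarrow> {g x, g y} = {g a, g c}" if "x \<in> V'" "y \<in> V'" for x y
    using that abcV' inj_on_eq_iff[OF inj] by (auto simp: doubleton_eq_iff)
  have vcase: "{v,y} \<in> E \<longleftrightarrow> {f v, f y} \<in> wheel_edges (m+1)" if "y \<in> V" for y
  proof (cases "y = v")
    case True
    have "{v,v} \<notin> E" using sg_edge[OF sg, of v v] by auto
    moreover have "{L,L} \<notin> wheel_edges (m+1)" using m4 wheel_mem[of "m+1" L L] by linarith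
    ultimately show ?thesis using True unfolding f_def by simp
  next
    case False
    then have yV': "y \<in> V'" using inV' that by simp
    have "{v,y} \<in> E \<longleftrightarrow> y \<in> {a,b,c}" using vedge by simp
    also have "\<dots> \<longleftrightarrow> g y = 0 \<or> g y = g a \<or> g y = g c"
    proof -
      have "g y = g a \<longleftrightarrow> y = a" "g y = g b \<longleftrightarrow> y = b" "g y = g c \<longleftrightarrow> y = c"
        using inj_on_eq_iff[OF inj] yV' abcV' by auto
      then show ?thesis using gb by auto
    qed
    also have "\<dots> \<longleftrightarrow> {L, s (g y)} \<in> wheel_edges (m+1)" using hs2[OF gr[OF yV']] by simp
    finally show ?thesis unfolding f_def using False by simp
  qed
  have adjf: "\<forall>u\<in>V. \<forall>w\<in>V. {u,w} \<in> E \<longleftrightarrow> {f u, f w} \<in> wheel_edges (m+1)"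
  proof (intro ballI)
    fix u w assume uw: "u \<in> V" "w \<in> V"
    show "{u,w} \<in> E \<longleftrightarrow> {f u, f w} \<in> wheel_edges (m+1)"
    proof (cases "u = v")
      case True then show ?thesis using vcase uw by simp
    next
      case uv: False
      show ?thesis
      proof (cases "w = v")
        case True then show ?thesis using vcase[of u] uw by (simp add: insert_commute)
      next
        case wv: False
        have uV': "u \<in> V'" and wV': "w \<in> V'" using inV' uw uv wv by auto
        have "{u,w} \<in> E \<longleftrightarrow> {u,w} \<in> E' \<and> {u,w} \<noteq> {a,c}" using edge_V'[OF uv wv acE] .
        also have "\<dots> \<longleftrightarrow> {g u, g w} \<in> wheel_edges m \<and> {g u, g w} \<noteq> {g a, g c}"
          using adj uV' wV' gac[OF uV' wV'] by simp
        also have "\<dots> \<longleftrightarrow> {s (g u), s (g w)} \<in> wheel_edges (m+1)"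
          using hs1[OF gr[OF uV'] gr[OF wV']] by simp
        finally show ?thesis unfolding f_def using uv wv by simp
      qed
    qed
  qed
  show ?thesis unfolding graph_iso_def wheel_vertices_def using fbij adjf by blast
qed

end

context red begin

lemma extend:
  assumes acE: "{a,c} \<notin> E" and cV: "card V = m + 1" and m4: "m \<ge> 4"
    and iso: "graph_iso V' E' (wheel_vertices m) (wheel_edges m)"
  shows "graph_iso V E (wheel_vertices (m+1)) (wheel_edges (m+1))"
proof -
  obtain g0 where bij0: "bij_betw g0 V' {0..<m}"
    and adj0: "\<forall>u\<in>V'. \<forall>w\<in>V'. {u,w} \<in> E' \<longleftrightarrow> {g0 u, g0 w} \<in> wheel_edges m"
    using iso unfolding graph_iso_def wheel_vertices_def by blast
  have "\<exists>g. bij_betw g V' {0..<m} \<and> (\<forall>u\<in>V'. \<forall>w\<in>V'. {u,w} \<in> E' \<longleftrightarrow> {g u, g w} \<in> wheel_edges m) \<and> g b = 0"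
  proof (cases "m = 4")
    case True
    define B where "B = g0 b"
    have B4: "B < 4" using bij0 abcV' True unfolding B_def bij_betw_def by auto
    define \<tau> where "\<tau> i = (if i = 0 then B else if i = B then 0 else i)" for i :: nat
    have tinv: "\<tau> (\<tau> i) = i" for i unfolding \<tau>_def by auto
    have tinj: "\<tau> i = \<tau> j \<longleftrightarrow> i = j" for i j by (metis tinv)
    have tr: "\<tau> i < 4 \<longleftrightarrow> i < 4" for i unfolding \<tau>_def using B4 by auto
    have timg: "\<tau> ` {0..<4} = {0..<4}"
    proof (rule set_eqI)
      fix i show "i \<in> \<tau> ` {0..<4} \<longleftrightarrow> i \<in> {0..<4}"
        using tr tinv by (metis atLeastLessThan_iff image_iff zero_le)
    qed
    have tbij: "bij_betw \<tau> {0..<4} {0..<4}"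
      unfolding bij_betw_def using timg tinj by (simp add: inj_on_def)
    have gbij: "bij_betw (\<tau> \<circ> g0) V' {0..<m}" using bij_betw_trans[OF bij0] tbij True by simp
    have gadj: "\<forall>u\<in>V'. \<forall>w\<in>V'. {u,w} \<in> E' \<longleftrightarrow> {(\<tau> \<circ> g0) u, (\<tau> \<circ> g0) w} \<in> wheel_edges m"
      using adj0 True by (simp add: wheel4 tinj tr)
    have "(\<tau> \<circ> g0) b = 0" unfolding \<tau>_def B_def by simp
    then show ?thesis using gbij gadj by blast
  next
    case False
    then have m5: "m \<ge> 5" using m4 by simp
    have "g0 b = 0"
    proof (rule ccontr)
      assume nz: "g0 b \<noteq> 0"
      have "{g0 a, g0 b} \<in> wheel_edges m" "{g0 b, g0 c} \<in> wheel_edges m" "{g0 a, g0 c} \<in> wheel_edges m"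
        using adj0 abcV' clique ab_d bc_d ac_d by auto
      then have "g0 a = 0 \<or> g0 b = 0 \<or> g0 c = 0" by (rule wheel_tri[OF m5])
      then have "g0 a = 0 \<or> g0 c = 0" using nz by simp
      then show False
      proof
        assume "g0 a = 0"
        then show False using nohub[OF acE m5 bij0 adj0, of a c] ac_d by simp
      next
        assume "g0 c = 0"
        then show False using nohub[OF acE m5 bij0 adj0, of c a] ac_d by simp
      qed
    qed
    then show ?thesis using bij0 adj0 by blast
  qed
  then obtain g where bij: "bij_betw g V' {0..<m}"
    and adj: "\<forall>u\<in>V'. \<forall>w\<in>V'. {u,w} \<in> E' \<longleftrightarrow> {g u, g w} \<in> wheel_edges m" and gb: "g b = 0"
    by blast
  have inj: "inj_on g V'" using bij bij_betw_def by blast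
  have anz: "g a \<noteq> 0" using inj_on_eq_iff[OF inj] abcV' ab_d gb by metis
  have cnz: "g c \<noteq> 0" using inj_on_eq_iff[OF inj] abcV' bc_d gb by metis
  have acW: "{g a, g c} \<in> wheel_edges m" using adj abcV' clique ac_d by auto
  then have AC: "g a < m" "g c < m" "g c = g a + 1 \<or> g a = g c + 1 \<or> (g a = 1 \<and> g c = m - 1) \<or> (g c = 1 \<and> g a = m - 1)"
    using wheel_nz[of m "g a" "g c"] anz cnz m4 by auto
  show ?thesis
  proof (cases "g c = g a + 1 \<or> g a = g c + 1")
    case True
    define k where "k = min (g a) (g c)"
    have k: "1 \<le> k" "k + 2 \<le> m" "{g a, g c} = {k, k+1}"
    proof -
      show "1 \<le> k" "k + 2 \<le> m" unfolding k_def using True AC(1,2) anz cnz by (auto simp: min_def)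
      show "{g a, g c} = {k, k+1}"
      proof (cases "g c = g a + 1")
        case True then show ?thesis unfolding k_def by simp
      next
        case False
        then have "g a = g c + 1" using \<open>g c = g a + 1 \<or> g a = g c + 1\<close> by simp
        then show ?thesis unfolding k_def by (simp add: insert_commute)
      qed
    qed
    define s where "s i = (if i \<le> k then i else i + 1)" for i
    show ?thesis
    proof (rule relabel[OF acE cV m4 bij adj gb, of s "k+1"])
      show "inj_on s {0..<m}" unfolding s_def inj_on_def by auto
      show "\<And>i. i < m \<Longrightarrow> s i < m + 1" unfolding s_def by auto
      show "k + 1 < m + 1" using k by simp
      show "\<And>i. i < m \<Longrightarrow> s i \<noteq> k + 1" unfolding s_def by auto
      show "\<And>i j. i < m \<Longrightarrow> j < m \<Longrightarrow> {s i, s j} \<in> wheel_edges (m+1) \<longleftrightarrow> {i,j} \<in> wheel_edges m \<and> {i,j} \<noteq> {g a, g c}"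
        unfolding s_def k(3) using wheel_shift1[OF k(1) k(2) m4] by blast
      show "\<And>j. j < m \<Longrightarrow> {k+1, s j} \<in> wheel_edges (m+1) \<longleftrightarrow> j = 0 \<or> j = g a \<or> j = g c"
      proof -
        fix j assume "j < m"
        have "j = g a \<or> j = g c \<longleftrightarrow> j = k \<or> j = k + 1" using k(3) by (auto simp: doubleton_eq_iff)
        then show "{k+1, s j} \<in> wheel_edges (m+1) \<longleftrightarrow> j = 0 \<or> j = g a \<or> j = g c"
          unfolding s_def using wheel_shift2[OF k(1) k(2) m4 \<open>j < m\<close>] by blast
      qed
    qed
  next
    case False
    then have cl: "{g a, g c} = {1, m - 1}" using AC by (auto simp: insert_commute)
    show ?thesis
    proof (rule relabel[OF acE cV m4 bij adj gb, of id m])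
      show "inj_on id {0..<m}" by simp
      show "\<And>i. i < m \<Longrightarrow> id i < m + 1" by simp
      show "m < m + 1" by simp
      show "\<And>i. i < m \<Longrightarrow> id i \<noteq> m" by simp
      show "\<And>i j. i < m \<Longrightarrow> j < m \<Longrightarrow> {id i, id j} \<in> wheel_edges (m+1) \<longleftrightarrow> {i,j} \<in> wheel_edges m \<and> {i,j} \<noteq> {g a, g c}"
        unfolding cl using wheel_close1[OF m4] by simp
      show "\<And>j. j < m \<Longrightarrow> {m, id j} \<in> wheel_edges (m+1) \<longleftrightarrow> j = 0 \<or> j = g a \<or> j = g c"
      proof -
        fix j assume "j < m"
        have "j = g a \<or> j = g c \<longleftrightarrow> j = 1 \<or> j = m - 1" using cl by (auto simp: doubleton_eq_iff)
        then show "{m, id j} \<in> wheel_edges (m+1) \<longleftrightarrow> j = 0 \<or> j = g a \<or> j = g c"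
          using wheel_close2[OF m4 \<open>j < m\<close>] by simp
      qed
    qed
  qed
qed

end


lemma main_ind:
  "\<forall>V (E::'a set set). simple_graph V E \<and> k_connected 3 V E \<and> every_edge_in_triangle E \<and> card V = n
     \<longrightarrow> 2 * n - 2 \<le> card E \<and> (card E = 2 * n - 2 \<longrightarrow> graph_iso V E (wheel_vertices n) (wheel_edges n))"
proof (induction n rule: less_induct)
  case (less n)
  show ?case
  proof (intro allI impI, elim conjE)
    fix V :: "'a set" and E :: "'a set set"
    assume sg: "simple_graph V E" and kc: "k_connected 3 V E" and tri: "every_edge_in_triangle E"
      and cn: "card V = n"
    have n4: "n \<ge> 4" using kc cn unfolding k_connected_def by simp
    have fV: "finite V" using sg_finV[OF sg] .
    have d3: "\<And>x. x \<in> V \<Longrightarrow> card (nb E x) \<ge> 3" using min_deg3[OF sg kc] by blast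
    have hs: "2 * card E = (\<Sum>x\<in>V. card (nb E x))" using handshake[OF sg] .
    show "2 * n - 2 \<le> card E \<and> (card E = 2 * n - 2 \<longrightarrow> graph_iso V E (wheel_vertices n) (wheel_edges n))"
    proof (cases "\<exists>x\<in>V. card (nb E x) = 3")
      case False
      then have "\<And>x. x \<in> V \<Longrightarrow> 4 \<le> card (nb E x)" using d3 by fastforce
      then have "(\<Sum>x\<in>V. (4::nat)) \<le> (\<Sum>x\<in>V. card (nb E x))" by (rule sum_mono)
      then have "4 * n \<le> 2 * card E" using hs cn by simp
      then have "2 * n - 2 \<le> card E" "card E \<noteq> 2 * n - 2" using n4 by linarith+
      then show ?thesis by simp
    next
      case True
      then obtain v where vV: "v \<in> V" and v3: "card (nb E v) = 3" by blast
      show ?thesis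
      proof (cases "n = 4")
        case True
        have full: "nb E x = V - {x}" if xV: "x \<in> V" for x
        proof -
          have sub: "nb E x \<subseteq> V - {x}" using nb_sub[OF sg] nb_irr[OF sg] by blast
          have "card (V - {x}) = 3" using cn True xV fV by simp
          then show ?thesis using card_subset_eq[OF _ sub] d3[OF xV] fV card_mono[OF _ sub] by fastforce
        qed
        have "(\<Sum>x\<in>V. card (nb E x)) = (\<Sum>x\<in>V. 3)"
          using full cn True fV by (intro sum.cong) auto
        then have cE: "card E = 6" using hs cn True by simp
        obtain f :: "'a \<Rightarrow> nat" where fb: "bij_betw f V {0..<4}" using ex_bij_betw_finite_nat[OF fV] cn True by metis
        have finj: "inj_on f V" using fb bij_betw_def by blast
        have fr: "x \<in> V \<Longrightarrow> f x < 4" for x using fb unfolding bij_betw_def by auto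
        have "\<forall>u\<in>V. \<forall>w\<in>V. {u,w} \<in> E \<longleftrightarrow> {f u, f w} \<in> wheel_edges 4"
        proof (intro ballI)
          fix u w assume uw: "u \<in> V" "w \<in> V"
          have "{u,w} \<in> E \<longleftrightarrow> w \<in> nb E u" unfolding nb_def by simp
          also have "\<dots> \<longleftrightarrow> u \<noteq> w" using full[OF uw(1)] uw by auto
          also have "\<dots> \<longleftrightarrow> f u \<noteq> f w" using inj_on_eq_iff[OF finj uw] by simp
          also have "\<dots> \<longleftrightarrow> {f u, f w} \<in> wheel_edges 4" using wheel4 fr uw by simp
          finally show "{u,w} \<in> E \<longleftrightarrow> {f u, f w} \<in> wheel_edges 4" .
        qed
        then have "graph_iso V E (wheel_vertices n) (wheel_edges n)"
          unfolding graph_iso_def wheel_vertices_def using fb True by blast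
        then show ?thesis using cE True by simp
      next
        case False
        then have n5: "n \<ge> 5" using n4 by simp
        obtain a b c where abc: "nb E v = {a,b,c}" "a \<noteq> b" "b \<noteq> c" "a \<noteq> c" "{a,b} \<in> E" "{b,c} \<in> E"
          using deg3_path[OF sg tri v3] by blast
        interpret r: red V E v a b c
          by (unfold_locales) (use sg tri vV abc in auto)
        have cV': "card r.V' = n - 1" unfolding r.V'_def using cn vV fV by simp
        have IH: "2 * (n-1) - 2 \<le> card r.E' \<and> (card r.E' = 2 * (n-1) - 2 \<longrightarrow> graph_iso r.V' r.E' (wheel_vertices (n-1)) (wheel_edges (n-1)))"
          using less.IH[of "n-1"] n5 r.sg' r.conn'[OF kc] r.tri' cV' cn by auto
        have ce: "card E = card r.E' + 2 + (if {a,c} \<in> E then 1 else 0)" using r.card_red .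
        have ge: "2 * n - 2 \<le> card E" using IH ce n5 by auto
        have eq: "graph_iso V E (wheel_vertices n) (wheel_edges n)" if "card E = 2 * n - 2"
        proof -
          have acE: "{a,c} \<notin> E" using that ce IH n5 by (auto split: if_splits)
          have "card r.E' = 2 * (n-1) - 2" using that ce acE n5 by simp
          then have iso': "graph_iso r.V' r.E' (wheel_vertices (n-1)) (wheel_edges (n-1))" using IH by simp
          have "graph_iso V E (wheel_vertices (n-1+1)) (wheel_edges (n-1+1))"
            using r.extend[OF acE _ _ iso'] cn n5 by simp
          then show ?thesis using n5 by simp
        qed
        show ?thesis using ge eq by blast
      qed
    qed
  qed
qed

theorem lemma2:
  fixes V :: "'a set" and E :: "'a set set" and n :: nat
  assumes "simple_graph V E"
    and "k_connected 3 V E"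
    and "every_edge_in_triangle E"
    and "n = card V"
  shows "card E \<ge> 2 * n - 2 \<and>
         (card E = 2 * n - 2 \<longleftrightarrow> graph_iso V E (wheel_vertices n) (wheel_edges n))"
proof -
  have m: "2 * n - 2 \<le> card E \<and> (card E = 2 * n - 2 \<longrightarrow> graph_iso V E (wheel_vertices n) (wheel_edges n))"
    using main_ind[of n] assms by blast
  have n4: "card V \<ge> 4" using assms(2) unfolding k_connected_def by simp
  have "graph_iso V E (wheel_vertices n) (wheel_edges n) \<Longrightarrow> card E = 2 * n - 2"
    using iso_card[OF assms(1) n4] assms(4) by simp
  then show ?thesis using m by blast
qed


end
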